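(* Let $(\Omega,\mathcal F,\mathbb P)$ be a probability space. For each $N\in\mathbb N$ let $\{t_j\}_{j\in\mathbb N}=\{t_j^{(N)}\}_{j\in\mathbb N}$ be a sequence of positive random variables on it (dependence on $N$ suppressed) satisfying: (i) $\mathbb E(t_i)=\frac1N$ for all $i$ and all $N$; (ii) there exist $r>0$ and a constant $\tilde C>0$ such that $\mathbb E(t_i^{2+r})\le \frac{\tilde C}{N^{2+r}}$ for all $i$ and all $N$; (iii) for all $m\in\mathbb N$ (and all $N$), the vector $(t_1,\dots,t_m)$ is negatively superadditive dependent. Let $g:\mathbb N\to\mathbb N$ be a function such that $g(N)/N\to L$ as $N\to\infty$ for some $L>0$. Then $\sum_{j=1}^{g(N)}\big[t_j-\mathbb E t_j\big]\to0$ almost surely as $N\to\infty$, and consequently $\sum_{j=1}^{g(N)}t_j\to L$ almost surely.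
   Context: A function $\phi:\mathbb R^m\to\mathbb R$ is superadditive if $\phi(x\vee y)+\phi(x\wedge y)\ge\phi(x)+\phi(y)$ for all $x,y\in\mathbb R^m$, where $\vee$ and $\wedge$ denote componentwise maximum and minimum. A random vector $(X_1,\dots,X_m)$ is negatively superadditive dependent (NSD) if for every superadditive $\phi$ such that the expectation $\mathbb E\phi(X_1,\dots,X_m)$ exists, $\mathbb E\phi(X_1,\dots,X_m)\le\mathbb E\phi(X_1^*,\dots,X_m^* )$, where $X_1^*,\dots,X_m^*$ are independent and $X_i^*$ has the same distribution as $X_i$ for each $i$. *)

theory Defs
  imports "HOL-Probability.Probability"
begin

text \<open>Vectors in R^m are represented as extensional functions on a finite index set I
  (e.g. I = {1..m}); componentwise max/min are taken on I.\<close>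

definition superadditive_on :: "'i set \<Rightarrow> (('i \<Rightarrow> real) \<Rightarrow> real) \<Rightarrow> bool" where
  "superadditive_on I \<phi> \<longleftrightarrow>
     (\<forall>x\<in>PiE I (\<lambda>_. UNIV). \<forall>y\<in>PiE I (\<lambda>_. UNIV).
        \<phi> (\<lambda>i\<in>I. max (x i) (y i)) + \<phi> (\<lambda>i\<in>I. min (x i) (y i)) \<ge> \<phi> x + \<phi> y)"

definition NSD :: "'a measure \<Rightarrow> 'i set \<Rightarrow> ('i \<Rightarrow> 'a \<Rightarrow> real) \<Rightarrow> bool" where
  "NSD M I X \<longleftrightarrow>
     (\<forall>\<phi>. superadditive_on I \<phi>
        \<and> \<phi> \<in> borel_measurable (PiM I (\<lambda>_. borel))
        \<and> integrable M (\<lambda>\<omega>. \<phi> (\<lambda>i\<in>I. X i \<omega>))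
        \<and> integrable (PiM I (\<lambda>i. distr M borel (X i))) \<phi>
      \<longrightarrow> (\<integral>\<omega>. \<phi> (\<lambda>i\<in>I. X i \<omega>) \<partial>M)
          \<le> (\<integral>x. \<phi> x \<partial>(PiM I (\<lambda>i. distr M borel (X i)))))"

end

theory Submission
  imports Defs "HOL-Real_Asymp.Real_Asymp"
begin


definition clip :: "real \<Rightarrow> real \<Rightarrow> real" where
  "clip c x = max 0 (min x c)"

lemma clip_mono: "x \<le> y \<Longrightarrow> clip c x \<le> clip c y"
  by (auto simp: clip_def)

lemma clip_max: "clip c (max x y) = max (clip c x) (clip c y)"
  by (auto simp: clip_def max_def min_def)

lemma clip_min: "clip c (min x y) = min (clip c x) (clip c y)"
  by (auto simp: clip_def max_def min_def)

lemma clip_bounds: "0 \<le> c \<Longrightarrow> 0 \<le> clip c x \<and> clip c x \<le> c"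
  by (auto simp: clip_def)

lemma measurable_clip[measurable]: "clip c \<in> borel_measurable borel"
  unfolding clip_def by measurable

lemma exp_supermod:
  fixes a b u v :: real
  assumes "u + v = a + b" "v \<le> a" "v \<le> b"
  shows "exp a + exp b \<le> exp u + exp v"
proof -
  have "0 \<le> (exp a - exp v) * (exp b - exp v)"
    using assms by (intro mult_nonneg_nonneg) auto
  hence "exp v * (exp a + exp b) \<le> exp (a + b) + exp v * exp v"
    by (simp add: algebra_simps exp_add)
  also have "exp (a + b) = exp v * exp u" using assms(1) by (simp add: exp_add[symmetric] add.commute)
  finally have "exp v * (exp a + exp b) \<le> exp v * (exp u + exp v)" by (simp add: algebra_simps)
  thus ?thesis by simp
qed

lemma superadd_exp_clip:
  assumes "finite I"
  shows "superadditive_on I (\<lambda>x. exp (l * (\<Sum>i\<in>I. clip c (x i))))"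
  unfolding superadditive_on_def
proof (intro ballI)
  fix x y :: "'a \<Rightarrow> real"
  define A where "A = (\<Sum>i\<in>I. clip c (x i))"
  define B where "B = (\<Sum>i\<in>I. clip c (y i))"
  define U where "U = (\<Sum>i\<in>I. max (clip c (x i)) (clip c (y i)))"
  define V where "V = (\<Sum>i\<in>I. min (clip c (x i)) (clip c (y i)))"
  have U: "(\<Sum>i\<in>I. clip c ((\<lambda>i\<in>I. max (x i) (y i)) i)) = U"
    unfolding U_def by (intro sum.cong) (auto simp: clip_max)
  have V: "(\<Sum>i\<in>I. clip c ((\<lambda>i\<in>I. min (x i) (y i)) i)) = V"
    unfolding V_def by (intro sum.cong) (auto simp: clip_min)
  have UV: "U + V = A + B"
    unfolding U_def V_def A_def B_def sum.distrib[symmetric]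
    by (intro sum.cong) (auto simp: max_def min_def)
  have VA: "V \<le> A" "V \<le> B" unfolding V_def A_def B_def by (auto intro!: sum_mono)
  have UA: "A \<le> U" "B \<le> U" unfolding U_def A_def B_def by (auto intro!: sum_mono)
  have "exp (l * A) + exp (l * B) \<le> exp (l * U) + exp (l * V)"
  proof (cases "l \<ge> 0")
    case True
    have e: "l * U + l * V = l * A + l * B" using UV by (metis distrib_left)
    show ?thesis by (rule exp_supermod[OF e]) (use VA True in \<open>auto intro: mult_left_mono\<close>)
  next
    case False
    have e: "l * V + l * U = l * A + l * B" using UV by (metis distrib_left add.commute)
    have "exp (l * A) + exp (l * B) \<le> exp (l * V) + exp (l * U)"
      by (rule exp_supermod[OF e]) (use UA False in \<open>auto intro: mult_left_mono_neg\<close>)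
    thus ?thesis by simp
  qed
  thus "exp (l * (\<Sum>i\<in>I. clip c (x i))) + exp (l * (\<Sum>i\<in>I. clip c (y i)))
    \<le> exp (l * (\<Sum>i\<in>I. clip c ((\<lambda>i\<in>I. max (x i) (y i)) i))) +
       exp (l * (\<Sum>i\<in>I. clip c ((\<lambda>i\<in>I. min (x i) (y i)) i)))"
    unfolding U V A_def B_def .
qed



lemma exp_clip_bound:
  assumes "0 \<le> c"
  shows "\<bar>exp (l * (\<Sum>i\<in>I. clip c (x i)))\<bar> \<le> exp (\<bar>l\<bar> * (real (card I) * c))"
proof -
  have "0 \<le> (\<Sum>i\<in>I. clip c (x i))" using clip_bounds[OF assms] by (intro sum_nonneg) auto
  moreover have "(\<Sum>i\<in>I. clip c (x i)) \<le> real (card I) * c"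
    using sum_mono[of I "\<lambda>i. clip c (x i)" "\<lambda>_. c"] clip_bounds[OF assms] by auto
  ultimately have "l * (\<Sum>i\<in>I. clip c (x i)) \<le> \<bar>l\<bar> * (real (card I) * c)"
    by (meson abs_ge_self abs_ge_zero mult_left_mono mult_right_mono order_trans)
  thus ?thesis by simp
qed

lemma lclip_bound: "0 \<le> c \<Longrightarrow> l * clip c x \<le> \<bar>l * c\<bar>"
proof -
  assume c: "0 \<le> c"
  have "l * clip c x \<le> \<bar>l\<bar> * clip c x"
    using clip_bounds[OF c, of x] by (intro mult_right_mono) auto
  also have "\<dots> \<le> \<bar>l\<bar> * c" using clip_bounds[OF c, of x] by (intro mult_left_mono) auto
  finally show ?thesis using c by (simp add: abs_mult)
qed

lemma nsd_mgf:
  assumes P: "prob_space M" and fin: "finite I"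
    and meas: "\<And>i. i \<in> I \<Longrightarrow> X i \<in> borel_measurable M"
    and nsd: "NSD M I X" and c: "0 \<le> c"
  shows "(\<integral>\<omega>. exp (l * (\<Sum>i\<in>I. clip c (X i \<omega>))) \<partial>M)
           \<le> (\<Prod>i\<in>I. \<integral>\<omega>. exp (l * clip c (X i \<omega>)) \<partial>M)"
proof -
  interpret prob_space M by (rule P)
  define \<phi> where "\<phi> = (\<lambda>x::'b \<Rightarrow> real. exp (l * (\<Sum>i\<in>I. clip c (x i))))"
  define X' where "X' = (\<lambda>i. if i \<in> I then X i else (\<lambda>_. 0::real))"
  have measX'[measurable]: "X' i \<in> borel_measurable M" for i
    using meas by (auto simp: X'_def)
  let ?P = "PiM I (\<lambda>i. distr M borel (X i))"
  have PP: "?P = PiM I (\<lambda>i. distr M borel (X' i))"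
    by (intro PiM_cong) (auto simp: X'_def)
  interpret D: prob_space "distr M borel (X' i)" for i by (intro prob_space_distr) simp
  interpret PS: product_prob_space "\<lambda>i. distr M borel (X' i)" I ..
  have fm: "finite_measure (PiM I (\<lambda>i. distr M borel (X' i)))"
    using prob_space_PiM[of I "\<lambda>i. distr M borel (X' i)"] D.prob_space_axioms
    unfolding prob_space_def by blast
  have phim: "\<phi> \<in> borel_measurable (PiM I (\<lambda>_. borel))"
    unfolding \<phi>_def by measurable
  have bnd: "\<bar>\<phi> x\<bar> \<le> exp (\<bar>l\<bar> * (real (card I) * c))" for x
    unfolding \<phi>_def by (rule exp_clip_bound[OF c])
  have int1: "integrable M (\<lambda>\<omega>. \<phi> (\<lambda>i\<in>I. X i \<omega>))"
  proof (rule integrable_const_bound[where B="exp (\<bar>l\<bar> * (real (card I) * c))"])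
    show "AE x in M. norm (\<phi> (\<lambda>i\<in>I. X i x)) \<le> exp (\<bar>l\<bar> * (real (card I) * c))"
      using bnd by simp
    have "(\<lambda>\<omega>. \<phi> (\<lambda>i\<in>I. X i \<omega>)) = (\<lambda>\<omega>. exp (l * (\<Sum>i\<in>I. clip c (X' i \<omega>))))"
      unfolding \<phi>_def X'_def by (intro ext) (auto intro!: sum.cong)
    also have "\<dots> \<in> borel_measurable M" by measurable
    finally show "(\<lambda>\<omega>. \<phi> (\<lambda>i\<in>I. X i \<omega>)) \<in> borel_measurable M" .
  qed
  have phim': "\<phi> \<in> borel_measurable ?P"
    using phim by (simp add: measurable_def space_PiM sets_PiM_cong[OF refl, of I "\<lambda>i. distr M borel (X i)" "\<lambda>_. borel"])
  have int2: "integrable ?P \<phi>"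
    unfolding PP
  proof (rule finite_measure.integrable_const_bound[where B="exp (\<bar>l\<bar> * (real (card I) * c))", OF fm])
    show "AE x in PiM I (\<lambda>i. distr M borel (X' i)). norm (\<phi> x) \<le> exp (\<bar>l\<bar> * (real (card I) * c))"
      using bnd by simp
    show "\<phi> \<in> borel_measurable (PiM I (\<lambda>i. distr M borel (X' i)))"
      using phim' PP by simp
  qed
  have "(\<integral>\<omega>. exp (l * (\<Sum>i\<in>I. clip c (X i \<omega>))) \<partial>M) = (\<integral>\<omega>. \<phi> (\<lambda>i\<in>I. X i \<omega>) \<partial>M)"
    unfolding \<phi>_def by (intro Bochner_Integration.integral_cong refl) (auto intro!: sum.cong arg_cong[where f=exp])
  also have "\<dots> \<le> (\<integral>x. \<phi> x \<partial>?P)"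
    using spec[OF nsd[unfolded NSD_def], of \<phi>] superadd_exp_clip[OF fin, of l c] phim int1 int2 unfolding \<phi>_def by blast
  also have "\<dots> = (\<integral>x. (\<Prod>i\<in>I. exp (l * clip c (x i))) \<partial>PiM I (\<lambda>i. distr M borel (X' i)))"
    unfolding PP \<phi>_def by (simp add: exp_sum[OF fin] sum_distrib_left)
  also have "\<dots> = (\<Prod>i\<in>I. \<integral>y. exp (l * clip c y) \<partial>distr M borel (X' i))"
    by (rule PS.product_integral_prod[OF fin, where f="\<lambda>i y. exp (l * clip c y)"])
       (auto intro!: D.integrable_const_bound[where B="exp \<bar>l * c\<bar>"] lclip_bound c)
  also have "\<dots> = (\<Prod>i\<in>I. \<integral>\<omega>. exp (l * clip c (X i \<omega>)) \<partial>M)"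
    by (intro prod.cong refl, subst integral_distr) (auto simp: X'_def meas)
  finally show ?thesis .
qed



lemma exp_le_quad:
  fixes u :: real
  assumes "\<bar>u\<bar> \<le> 1"
  shows "exp u \<le> 1 + u + u^2"
proof (cases "u \<ge> 0")
  case True then show ?thesis using exp_bound[of u] assms by auto
next
  case False
  define y where "y = -u"
  have y: "0 \<le> y" "y \<le> 1" using False assms by (auto simp: y_def)
  have "1 \<le> (1 - y + y^2) * (1 + y)"
    using y by (simp add: algebra_simps power2_eq_square power3_eq_cube)
  also have "\<dots> \<le> (1 - y + y^2) * exp y"
  proof (rule mult_left_mono)
    show "0 \<le> 1 - y + y^2" using y by (simp add: power2_eq_square)
  qed simp
  finally have "1 \<le> (1 + u + u^2) * exp (-u)" by (simp add: y_def)
  thus ?thesis by (simp add: exp_minus field_simps)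
qed

lemma mgf_single:
  fixes Y :: "'a \<Rightarrow> real" and c l :: real
  assumes P: "prob_space M" and Ym[measurable]: "Y \<in> borel_measurable M"
    and Yb: "\<And>\<omega>. \<omega> \<in> space M \<Longrightarrow> 0 \<le> Y \<omega> \<and> Y \<omega> \<le> c"
    and lc: "\<bar>l\<bar> * c \<le> 1"
  shows "(\<integral>\<omega>. exp (l * Y \<omega>) \<partial>M) \<le> exp ((l + l^2 * c) * (\<integral>\<omega>. Y \<omega> \<partial>M))"
proof -
  interpret prob_space M by (rule P)
  have intY: "integrable M Y"
    by (rule integrable_const_bound[where B=c]) (use Yb in auto)
  have intE: "integrable M (\<lambda>\<omega>. exp (l * Y \<omega>))"
  proof (rule integrable_const_bound[where B="exp 1"])
    show "AE x in M. norm (exp (l * Y x)) \<le> exp 1"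
    proof (rule AE_I2)
      fix x assume x: "x \<in> space M"
      have "l * Y x \<le> \<bar>l\<bar> * c"
        using Yb[OF x] by (meson abs_ge_self abs_ge_zero mult_left_mono mult_right_mono order_trans)
      thus "norm (exp (l * Y x)) \<le> exp 1" using lc by simp
    qed
  qed simp
  have pt: "exp (l * Y \<omega>) \<le> 1 + (l + l^2 * c) * Y \<omega>" if w: "\<omega> \<in> space M" for \<omega>
  proof -
    have y: "0 \<le> Y \<omega>" "Y \<omega> \<le> c" using Yb[OF w] by auto
    have "\<bar>l * Y \<omega>\<bar> \<le> \<bar>l\<bar> * c" using y by (simp add: abs_mult mult_left_mono)
    hence "exp (l * Y \<omega>) \<le> 1 + l * Y \<omega> + (l * Y \<omega>)^2" using lc by (intro exp_le_quad) simp
    also have "(l * Y \<omega>)^2 = l^2 * (Y \<omega> * Y \<omega>)" by (simp add: power2_eq_square)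
    also have "\<dots> \<le> l^2 * (c * Y \<omega>)" using y by (intro mult_left_mono mult_right_mono) auto
    finally show ?thesis by (simp add: algebra_simps)
  qed
  have "(\<integral>\<omega>. exp (l * Y \<omega>) \<partial>M) \<le> (\<integral>\<omega>. 1 + (l + l^2 * c) * Y \<omega> \<partial>M)"
    by (intro integral_mono intE pt) (auto intro!: integrable_add integrable_mult_right intY)
  also have "\<dots> = 1 + (l + l^2 * c) * (\<integral>\<omega>. Y \<omega> \<partial>M)"
    using intY by (simp add: prob_space)
  also have "\<dots> \<le> exp ((l + l^2 * c) * (\<integral>\<omega>. Y \<omega> \<partial>M))" by (rule exp_ge_add_one_self)
  finally show ?thesis .
qed

lemma nsd_mgf2:
  assumes P: "prob_space M" and fin: "finite I"
    and meas: "\<And>i. i \<in> I \<Longrightarrow> X i \<in> borel_measurable M"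
    and nsd: "NSD M I X" and c: "0 \<le> c" and lc: "\<bar>l\<bar> * c \<le> 1"
  shows "(\<integral>\<omega>. exp (l * (\<Sum>i\<in>I. clip c (X i \<omega>))) \<partial>M)
           \<le> exp ((l + l^2 * c) * (\<Sum>i\<in>I. \<integral>\<omega>. clip c (X i \<omega>) \<partial>M))"
proof -
  have "(\<integral>\<omega>. exp (l * (\<Sum>i\<in>I. clip c (X i \<omega>))) \<partial>M)
           \<le> (\<Prod>i\<in>I. \<integral>\<omega>. exp (l * clip c (X i \<omega>)) \<partial>M)"
    by (rule nsd_mgf[OF P fin meas nsd c])
  also have "\<dots> \<le> (\<Prod>i\<in>I. exp ((l + l^2 * c) * (\<integral>\<omega>. clip c (X i \<omega>) \<partial>M)))"
  proof (rule prod_mono, rule conjI)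
    fix i assume i: "i \<in> I"
    show "0 \<le> (\<integral>\<omega>. exp (l * clip c (X i \<omega>)) \<partial>M)" by simp
    show "(\<integral>\<omega>. exp (l * clip c (X i \<omega>)) \<partial>M) \<le> exp ((l + l^2 * c) * (\<integral>\<omega>. clip c (X i \<omega>) \<partial>M))"
      by (rule mgf_single[OF P _ _ lc]) (use meas[OF i] clip_bounds[OF c] in auto)
  qed
  also have "\<dots> = exp ((l + l^2 * c) * (\<Sum>i\<in>I. \<integral>\<omega>. clip c (X i \<omega>) \<partial>M))"
    by (simp add: exp_sum[OF fin, symmetric] sum_distrib_left)
  finally show ?thesis .
qed



lemma markov_gen:
  fixes f :: "'a \<Rightarrow> real"
  assumes P: "prob_space M" and A: "A \<in> sets M" and f: "integrable M f"
    and nn: "\<And>\<omega>. \<omega> \<in> space M \<Longrightarrow> 0 \<le> f \<omega>" and ge: "\<And>\<omega>. \<omega> \<in> A \<Longrightarrow> 1 \<le> f \<omega>"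
  shows "measure M A \<le> (\<integral>\<omega>. f \<omega> \<partial>M)"
proof -
  interpret prob_space M by (rule P)
  have "measure M A = (\<integral>\<omega>. indicator A \<omega> \<partial>M)"
    using A sets.sets_into_space[OF A] by (simp add: Int_absorb2)
  also have "\<dots> \<le> (\<integral>\<omega>. f \<omega> \<partial>M)"
    using A by (intro integral_mono f integrable_real_indicator) (auto simp: indicator_def nn ge less_top[symmetric])
  finally show ?thesis .
qed

lemma trunc_pt:
  fixes x c p :: real
  assumes "0 < x" "0 < c" "1 \<le> p"
  shows "x - clip c x \<le> x powr p / c powr (p - 1)"
proof (cases "x \<le> c")
  case True
  hence "x - clip c x = 0" using assms by (simp add: clip_def)
  thus ?thesis using assms by simp
next
  case False
  have "c powr (p - 1) \<le> x powr (p - 1)" using False assms by (intro powr_mono2) auto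
  hence "1 \<le> x powr (p - 1) / c powr (p - 1)" using assms by simp
  hence "x * 1 \<le> x * (x powr (p - 1) / c powr (p - 1))" using assms by (intro mult_left_mono) auto
  also have "x * (x powr (p - 1) / c powr (p - 1)) = x powr p / c powr (p - 1)"
    using assms powr_add[of x 1 "p - 1"] by simp
  finally show ?thesis using assms False by (simp add: clip_def)
qed

lemma tail_pt:
  fixes x c p :: real
  assumes "c < x" "0 < c" "0 \<le> p"
  shows "1 \<le> x powr p / c powr p"
proof -
  have "c powr p \<le> x powr p" using assms by (intro powr_mono2) auto
  thus ?thesis using assms by simp
qed

lemma clip_le: "0 \<le> x \<Longrightarrow> 0 \<le> c \<Longrightarrow> clip c x \<le> x"
  by (simp add: clip_def)



lemma tail_bound:
  fixes X :: "'i \<Rightarrow> 'a \<Rightarrow> real"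
  assumes P: "prob_space M" and fin: "finite I"
    and meas: "\<And>i. i \<in> I \<Longrightarrow> X i \<in> borel_measurable M"
    and pos: "\<And>i \<omega>. i \<in> I \<Longrightarrow> \<omega> \<in> space M \<Longrightarrow> 0 < X i \<omega>"
    and nsd: "NSD M I X" and c: "0 < c" and eps: "0 < \<epsilon>"
    and intX: "\<And>i. i \<in> I \<Longrightarrow> integrable M (X i) \<and> (\<integral>\<omega>. X i \<omega> \<partial>M) = a"
    and mom: "\<And>i. i \<in> I \<Longrightarrow> integrable M (\<lambda>\<omega>. X i \<omega> powr p) \<and> (\<integral>\<omega>. X i \<omega> powr p \<partial>M) \<le> K"
    and p: "1 \<le> p"
    and th: "0 < \<theta>" "\<theta> \<le> 1" "4 * \<theta> * B \<le> \<epsilon>"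
    and B: "real (card I) * a \<le> B"
    and D: "real (card I) * K / c powr (p - 1) \<le> \<epsilon> / 2"
  shows "measure M {\<omega> \<in> space M. \<epsilon> < \<bar>\<Sum>i\<in>I. (X i \<omega> - a)\<bar>}
           \<le> 2 * exp (- (\<theta> * \<epsilon> / (4 * c))) + real (card I) * K / c powr p"
proof -
  interpret prob_space M by (rule P)
  define n where "n = real (card I)"
  define Ms where "Ms = (\<Sum>i\<in>I. \<integral>\<omega>. clip c (X i \<omega>) \<partial>M)"
  define l where "l = \<theta> / c"
  define Sy where "Sy = (\<lambda>\<omega>. \<Sum>i\<in>I. clip c (X i \<omega>))"
  have l: "0 < l" "\<bar>l\<bar> * c = \<theta>" "\<bar>l\<bar> * c \<le> 1" "\<bar>-l\<bar> * c \<le> 1"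
    using c th by (auto simp: l_def)
  have intclip: "integrable M (\<lambda>\<omega>. clip c (X i \<omega>))" if i: "i \<in> I" for i
    by (rule integrable_const_bound[where B=c]) (use clip_bounds[of c] c meas[OF i] in auto)
  have mu_le: "(\<integral>\<omega>. clip c (X i \<omega>) \<partial>M) \<le> a" if i: "i \<in> I" for i
  proof -
    have "(\<integral>\<omega>. clip c (X i \<omega>) \<partial>M) \<le> (\<integral>\<omega>. X i \<omega> \<partial>M)"
      using intclip[OF i] intX[OF i] pos[OF i] c by (intro integral_mono) (auto intro!: clip_le simp: less_imp_le)
    thus ?thesis using intX[OF i] by simp
  qed
  have mu_ge: "a - (\<integral>\<omega>. clip c (X i \<omega>) \<partial>M) \<le> K / c powr (p - 1)" if i: "i \<in> I" for i
  proof -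
    have "a - (\<integral>\<omega>. clip c (X i \<omega>) \<partial>M) = (\<integral>\<omega>. X i \<omega> - clip c (X i \<omega>) \<partial>M)"
      using intclip[OF i] intX[OF i] by simp
    also have "\<dots> \<le> (\<integral>\<omega>. X i \<omega> powr p / c powr (p - 1) \<partial>M)"
      using intclip[OF i] intX[OF i] mom[OF i] pos[OF i] c p
      by (intro integral_mono) (auto intro!: trunc_pt)
    also have "\<dots> = (\<integral>\<omega>. X i \<omega> powr p \<partial>M) / c powr (p - 1)" by simp
    also have "\<dots> \<le> K / c powr (p - 1)" using mom[OF i] c by (intro divide_right_mono) auto
    finally show ?thesis .
  qed
  have Ms_le: "Ms \<le> n * a"
    unfolding Ms_def n_def using sum_mono[of I "\<lambda>i. \<integral>\<omega>. clip c (X i \<omega>) \<partial>M" "\<lambda>_. a"] mu_le by simp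
  have Ms_ge: "n * a - Ms \<le> \<epsilon> / 2"
  proof -
    have "n * a - Ms = (\<Sum>i\<in>I. a - (\<integral>\<omega>. clip c (X i \<omega>) \<partial>M))"
      unfolding Ms_def n_def by (simp add: sum_subtractf)
    also have "\<dots> \<le> (\<Sum>i\<in>I. K / c powr (p - 1))" by (intro sum_mono mu_ge)
    also have "\<dots> = n * K / c powr (p - 1)" by (simp add: n_def)
    finally show ?thesis using D unfolding n_def by linarith
  qed
  have Ms_nn: "0 \<le> Ms" unfolding Ms_def using clip_bounds[of c] c by (intro sum_nonneg integral_nonneg_AE) auto
  have Ms_B: "Ms \<le> B" using Ms_le B by (simp add: n_def)
  have Sym[measurable]: "Sy \<in> borel_measurable M"
    unfolding Sy_def by (intro borel_measurable_sum) (use meas in measurable)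
  have intE: "integrable M (\<lambda>\<omega>. exp (l' * Sy \<omega>))" for l'
  proof (rule integrable_const_bound[where B="exp (\<bar>l'\<bar> * (real (card I) * c))"])
    show "AE x in M. norm (exp (l' * Sy x)) \<le> exp (\<bar>l'\<bar> * (real (card I) * c))"
      using exp_clip_bound[where c=c and l=l' and I=I] c unfolding Sy_def by auto
  qed simp
  have mgf: "(\<integral>\<omega>. exp (l' * Sy \<omega>) \<partial>M) \<le> exp ((l' + l'^2 * c) * Ms)" if "\<bar>l'\<bar> * c \<le> 1" for l'
    unfolding Sy_def Ms_def by (rule nsd_mgf2[OF P fin meas nsd _ that]) (use c in auto)
  define U1 where "U1 = {\<omega> \<in> space M. \<epsilon> < Sy \<omega> - n * a}"
  define U2 where "U2 = {\<omega> \<in> space M. Sy \<omega> - n * a < - \<epsilon>}"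
  define U3 where "U3 = (\<Union>i\<in>I. {\<omega> \<in> space M. c < X i \<omega>})"
  have U1s: "U1 \<in> sets M" unfolding U1_def by measurable
  have U2s: "U2 \<in> sets M" unfolding U2_def by measurable
  have U3s: "U3 \<in> sets M" unfolding U3_def using fin meas by (intro sets.finite_UN) auto
  have m1: "measure M U1 \<le> exp (- (\<theta> * \<epsilon> / (4 * c)))"
  proof -
    have "measure M U1 \<le> (\<integral>\<omega>. exp (- l * (n * a + \<epsilon>)) * exp (l * Sy \<omega>) \<partial>M)"
    proof (rule markov_gen[OF P U1s])
      show "integrable M (\<lambda>\<omega>. exp (- l * (n * a + \<epsilon>)) * exp (l * Sy \<omega>))"
        using intE by simp
      fix \<omega> assume "\<omega> \<in> U1"
      hence "l * (n * a + \<epsilon>) \<le> l * Sy \<omega>" using l unfolding U1_def by (intro mult_left_mono) auto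
      thus "1 \<le> exp (- l * (n * a + \<epsilon>)) * exp (l * Sy \<omega>)" by (simp add: exp_add[symmetric])
    qed simp
    also have "\<dots> = exp (- l * (n * a + \<epsilon>)) * (\<integral>\<omega>. exp (l * Sy \<omega>) \<partial>M)" by simp
    also have "\<dots> \<le> exp (- l * (n * a + \<epsilon>)) * exp ((l + l^2 * c) * Ms)"
      using mgf[OF l(3)] by (intro mult_left_mono) auto
    also have "\<dots> = exp (- l * (n * a + \<epsilon>) + (l + l^2 * c) * Ms)" by (rule exp_add[symmetric])
    also have "\<dots> \<le> exp (- (\<theta> * \<epsilon> / (4 * c)))"
    proof -
      have e1: "l * (Ms - n * a) \<le> 0" using l Ms_le by (simp add: mult_nonneg_nonpos)
      have e2: "l^2 * c * Ms \<le> l^2 * c * B" using Ms_B c by (intro mult_left_mono) auto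
      have e3: "l^2 * c * B = l * (\<theta> * B)" using l c by (simp add: power2_eq_square l_def)
      have e4: "l * (\<theta> * B) \<le> l * (\<epsilon> / 4)" using l th by (intro mult_left_mono) auto
      have e5: "l * \<epsilon> / 4 = \<theta> * \<epsilon> / (4 * c)" by (simp add: l_def)
      have "- l * (n * a + \<epsilon>) + (l + l^2 * c) * Ms = l * (Ms - n * a) - l * \<epsilon> + l^2 * c * Ms"
        by (simp add: algebra_simps)
      also have "\<dots> \<le> - l * \<epsilon> + l * (\<epsilon> / 4)" using e1 e2 e3 e4 by linarith
      also have "\<dots> \<le> - (l * \<epsilon> / 4)" using l eps by (simp add: algebra_simps)
      finally show ?thesis using e5 by simp
    qed
    finally show ?thesis .
  qed
  have m2: "measure M U2 \<le> exp (- (\<theta> * \<epsilon> / (4 * c)))"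
  proof -
    have "measure M U2 \<le> (\<integral>\<omega>. exp (l * (n * a - \<epsilon>)) * exp ((- l) * Sy \<omega>) \<partial>M)"
    proof (rule markov_gen[OF P U2s])
      show "integrable M (\<lambda>\<omega>. exp (l * (n * a - \<epsilon>)) * exp ((- l) * Sy \<omega>))"
        using intE[of "- l"] by (intro integrable_mult_right) simp
      fix \<omega> assume "\<omega> \<in> U2"
      hence "l * Sy \<omega> \<le> l * (n * a - \<epsilon>)" using l unfolding U2_def by (intro mult_left_mono) auto
      thus "1 \<le> exp (l * (n * a - \<epsilon>)) * exp ((- l) * Sy \<omega>)" by (simp add: exp_add[symmetric])
    qed simp
    also have "\<dots> = exp (l * (n * a - \<epsilon>)) * (\<integral>\<omega>. exp ((- l) * Sy \<omega>) \<partial>M)" by simp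
    also have "\<dots> \<le> exp (l * (n * a - \<epsilon>)) * exp ((- l + (- l)^2 * c) * Ms)"
      using mgf[OF l(4)] by (intro mult_left_mono) auto
    also have "\<dots> = exp (l * (n * a - \<epsilon>) + (- l + l^2 * c) * Ms)" by (simp only: power2_minus exp_add)
    also have "\<dots> \<le> exp (- (\<theta> * \<epsilon> / (4 * c)))"
    proof -
      have e1: "l * (n * a - Ms) \<le> l * (\<epsilon> / 2)" using l Ms_ge by (intro mult_left_mono) auto
      have e2: "l^2 * c * Ms \<le> l^2 * c * B" using Ms_B c by (intro mult_left_mono) auto
      have e3: "l^2 * c * B = l * (\<theta> * B)" using l c by (simp add: power2_eq_square l_def)
      have e4: "l * (\<theta> * B) \<le> l * (\<epsilon> / 4)" using l th by (intro mult_left_mono) auto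
      have e5: "l * \<epsilon> / 4 = \<theta> * \<epsilon> / (4 * c)" by (simp add: l_def)
      have "l * (n * a - \<epsilon>) + (- l + l^2 * c) * Ms = l * (n * a - Ms) - l * \<epsilon> + l^2 * c * Ms"
        by (simp add: algebra_simps)
      also have "\<dots> \<le> l * (\<epsilon> / 2) - l * \<epsilon> + l * (\<epsilon> / 4)" using e1 e2 e3 e4 by linarith
      also have "\<dots> = - (l * \<epsilon> / 4)" by (simp add: algebra_simps)
      finally show ?thesis using e5 by simp
    qed
    finally show ?thesis .
  qed
  have m3: "measure M U3 \<le> n * K / c powr p"
  proof -
    have "measure M U3 \<le> (\<Sum>i\<in>I. measure M {\<omega> \<in> space M. c < X i \<omega>})"
      unfolding U3_def using fin meas by (intro finite_measure_subadditive_finite) auto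
    also have "\<dots> \<le> (\<Sum>i\<in>I. K / c powr p)"
    proof (rule sum_mono)
      fix i assume i: "i \<in> I"
      have "measure M {\<omega> \<in> space M. c < X i \<omega>} \<le> (\<integral>\<omega>. X i \<omega> powr p / c powr p \<partial>M)"
        by (rule markov_gen[OF P]) (use meas[OF i] mom[OF i] c p in \<open>auto intro!: powr_mono2\<close>)
      also have "\<dots> = (\<integral>\<omega>. X i \<omega> powr p \<partial>M) / c powr p" by simp
      also have "\<dots> \<le> K / c powr p" using mom[OF i] c by (intro divide_right_mono) auto
      finally show "measure M {\<omega> \<in> space M. c < X i \<omega>} \<le> K / c powr p" .
    qed
    also have "\<dots> = n * K / c powr p" by (simp add: n_def)
    finally show ?thesis .
  qed
  have incl: "{\<omega> \<in> space M. \<epsilon> < \<bar>\<Sum>i\<in>I. (X i \<omega> - a)\<bar>} \<subseteq> U1 \<union> U2 \<union> U3"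
  proof
    fix \<omega> assume w: "\<omega> \<in> {\<omega> \<in> space M. \<epsilon> < \<bar>\<Sum>i\<in>I. (X i \<omega> - a)\<bar>}"
    show "\<omega> \<in> U1 \<union> U2 \<union> U3"
    proof (cases "\<omega> \<in> U3")
      case False
      hence "\<forall>i\<in>I. X i \<omega> \<le> c" using w unfolding U3_def by auto
      hence "Sy \<omega> = (\<Sum>i\<in>I. X i \<omega>)" unfolding Sy_def using pos w
        by (intro sum.cong) (auto simp: clip_def)
      hence "(\<Sum>i\<in>I. (X i \<omega> - a)) = Sy \<omega> - n * a" by (simp add: sum_subtractf n_def)
      thus ?thesis using w unfolding U1_def U2_def by auto
    qed simp
  qed
  have "measure M {\<omega> \<in> space M. \<epsilon> < \<bar>\<Sum>i\<in>I. (X i \<omega> - a)\<bar>} \<le> measure M (U1 \<union> U2 \<union> U3)"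
    using incl U1s U2s U3s by (intro finite_measure_mono) auto
  also have "\<dots> \<le> measure M U1 + measure M U2 + measure M U3"
    using U1s U2s U3s measure_Un_le[of "U1 \<union> U2" M U3] measure_Un_le[of U1 M U2] by auto
  also have "\<dots> \<le> 2 * exp (- (\<theta> * \<epsilon> / (4 * c))) + real (card I) * K / c powr p"
    using m1 m2 m3 by (simp add: n_def)
  finally show ?thesis .
qed



lemma exp_powr_summable:
  fixes \<kappa> \<alpha> :: real
  assumes "0 < \<kappa>" "0 < \<alpha>"
  shows "summable (\<lambda>N::nat. exp (- (\<kappa> * real N powr \<alpha>)))"
proof -
  have "((\<lambda>x::real. exp (- (\<kappa> * x powr \<alpha>)) * x powr 2) \<longlongrightarrow> 0) at_top"
    using assms by real_asymp
  hence "(\<lambda>N::nat. exp (- (\<kappa> * real N powr \<alpha>)) * real N powr 2) \<longlonglongrightarrow> 0"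
    by (rule filterlim_compose[OF _ filterlim_real_sequentially])
  hence ev: "eventually (\<lambda>N. exp (- (\<kappa> * real N powr \<alpha>)) * real N powr 2 < 1) sequentially"
    by (rule order_tendstoD(2)) simp
  show ?thesis
  proof (rule summable_comparison_test_ev[OF _ iffD2[OF summable_real_powr_iff, of "-2"]])
    show "eventually (\<lambda>N. norm (exp (- (\<kappa> * real N powr \<alpha>))) \<le> real N powr -2) sequentially"
      using ev eventually_gt_at_top[of 0]
    proof eventually_elim
      case (elim N)
      hence "exp (- (\<kappa> * real N powr \<alpha>)) \<le> 1 / real N powr 2"
        by (simp add: field_simps)
      thus ?case by (simp add: powr_minus divide_inverse)
    qed
  qed simp
qed

lemma g_summable:
  fixes g :: "nat \<Rightarrow> nat" and L C r :: real
  assumes glim: "(\<lambda>N. real (g N) / real N) \<longlonglongrightarrow> L" and "0 < L" "0 \<le> C" "0 < r"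
  shows "summable (\<lambda>N. C * real (g N) * real N powr (-2 - r/2))"
proof -
  have ev: "eventually (\<lambda>N. real (g N) / real N < 2 * L) sequentially"
    using assms by (intro order_tendstoD(2)[OF glim]) auto
  show ?thesis
  proof (rule summable_comparison_test_ev)
    show "summable (\<lambda>N. 2 * L * C * real N powr (-1 - r/2))"
      by (intro summable_mult iffD2[OF summable_real_powr_iff]) (use assms in auto)
    show "eventually (\<lambda>N. norm (C * real (g N) * real N powr (-2 - r/2)) \<le> 2 * L * C * real N powr (-1 - r/2)) sequentially"
      using ev eventually_gt_at_top[of 0]
    proof eventually_elim
      case (elim N)
      have gN: "real (g N) \<le> 2 * L * real N" using elim by (simp add: field_simps)
      have "norm (C * real (g N) * real N powr (-2 - r/2)) = C * real (g N) * real N powr (-2 - r/2)"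
        using assms by simp
      also have "\<dots> \<le> C * (2 * L * real N) * real N powr (-2 - r/2)"
        using gN assms by (intro mult_right_mono mult_left_mono) auto
      also have "real N * real N powr (-2 - r/2) = real N powr (-1 - r/2)"
        using elim powr_add[of "real N" 1 "-2 - r/2"] by simp
      hence "C * (2 * L * real N) * real N powr (-2 - r/2) = 2 * L * C * real N powr (-1 - r/2)"
        by (simp add: algebra_simps)
      finally show ?case .
    qed
  qed
qed

lemma powr_calc:
  fixes N C p \<alpha> q :: real
  assumes "0 < N"
  shows "C / N powr p / (N powr (- \<alpha>)) powr q = C * N powr (\<alpha> * q - p)"
proof -
  have "(N powr (- \<alpha>)) powr q = N powr (- (\<alpha> * q))" by (simp add: powr_powr)
  also have "\<dots> = 1 / N powr (\<alpha> * q)" by (simp add: powr_minus_divide)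
  finally have e: "(N powr (- \<alpha>)) powr q = 1 / N powr (\<alpha> * q)" .
  have "N powr (\<alpha> * q - p) = N powr (\<alpha> * q) / N powr p" by (rule powr_diff)
  thus ?thesis unfolding e using assms by simp
qed



lemma key_eps:
  fixes M :: "'a measure"
    and t :: "nat \<Rightarrow> nat \<Rightarrow> 'a \<Rightarrow> real"
    and g :: "nat \<Rightarrow> nat"
    and r C L :: real
  assumes P: "prob_space M"
    and meas: "\<And>N j. N \<ge> 1 \<Longrightarrow> j \<ge> 1 \<Longrightarrow> t N j \<in> borel_measurable M"
    and pos: "\<And>N j \<omega>. N \<ge> 1 \<Longrightarrow> j \<ge> 1 \<Longrightarrow> \<omega> \<in> space M \<Longrightarrow> t N j \<omega> > 0"
    and mean: "\<And>N j. N \<ge> 1 \<Longrightarrow> j \<ge> 1 \<Longrightarrow>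
                  integrable M (t N j) \<and> (\<integral>\<omega>. t N j \<omega> \<partial>M) = 1 / real N"
    and r: "r > 0" and C: "C > 0"
    and moment: "\<And>N j. N \<ge> 1 \<Longrightarrow> j \<ge> 1 \<Longrightarrow>
                  (\<integral>\<^sup>+\<omega>. ennreal (t N j \<omega> powr (2 + r)) \<partial>M)
                    \<le> ennreal (C / real N powr (2 + r))"
    and nsd: "\<And>N m. N \<ge> 1 \<Longrightarrow> NSD M {1..m} (\<lambda>j. t N j)"
    and L: "L > 0"
    and glim: "(\<lambda>N. real (g N) / real N) \<longlonglongrightarrow> L"
    and eps: "\<epsilon> > 0"
  shows "AE \<omega> in M. eventually (\<lambda>N. \<bar>\<Sum>j=1..g N. (t N j \<omega> - 1 / real N)\<bar> \<le> \<epsilon>) sequentially"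
proof -
  interpret prob_space M by (rule P)
  define p where "p = 2 + r"
  define \<alpha> where "\<alpha> = r / (2 * (2 + r))"
  define \<theta> where "\<theta> = min 1 (\<epsilon> / (8 * L))"
  define c where "c = (\<lambda>N::nat. real N powr (- \<alpha>))"
  define v where "v = (\<lambda>N. C * real (g N) * real N powr (-2 - r/2))"
  define \<kappa> where "\<kappa> = \<theta> * \<epsilon> / 4"
  define A where "A = (\<lambda>N. if 1 \<le> N then {\<omega> \<in> space M. \<epsilon> < \<bar>\<Sum>j\<in>{1..g N}. (t N j \<omega> - 1 / real N)\<bar>} else {})"
  have \<alpha>p: "\<alpha> * p = r / 2" using r by (simp add: \<alpha>_def p_def field_simps)
  have \<alpha>: "0 < \<alpha>" using r by (simp add: \<alpha>_def)
  have p1: "1 \<le> p" using r by (simp add: p_def)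
  have th: "0 < \<theta>" "\<theta> \<le> 1" "4 * \<theta> * (2 * L) \<le> \<epsilon>"
    using eps L by (auto simp: \<theta>_def min_def field_simps)
  have \<kappa>: "0 < \<kappa>" using th eps by (simp add: \<kappa>_def)
  have momI: "integrable M (\<lambda>\<omega>. t N j \<omega> powr p) \<and> (\<integral>\<omega>. t N j \<omega> powr p \<partial>M) \<le> C / real N powr p"
    if N: "N \<ge> 1" "j \<ge> 1" for N j
  proof -
    have m[measurable]: "t N j \<in> borel_measurable M" by (rule meas[OF N])
    have fin: "(\<integral>\<^sup>+\<omega>. ennreal (t N j \<omega> powr p) \<partial>M) < \<infinity>"
      using moment[OF N] unfolding p_def by (simp add: le_less_trans)
    have int: "integrable M (\<lambda>\<omega>. t N j \<omega> powr p)"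
      by (rule integrableI_nonneg) (use fin in auto)
    have "ennreal (\<integral>\<omega>. t N j \<omega> powr p \<partial>M) = (\<integral>\<^sup>+\<omega>. ennreal (t N j \<omega> powr p) \<partial>M)"
      by (rule nn_integral_eq_integral[symmetric]) (use int in auto)
    also have "\<dots> \<le> ennreal (C / real N powr p)" using moment[OF N] by (simp add: p_def)
    finally have "(\<integral>\<omega>. t N j \<omega> powr p \<partial>M) \<le> C / real N powr p"
      using C by (subst (asm) ennreal_le_iff) auto
    with int show ?thesis by simp
  qed
  have bound: "measure M (A N) \<le> 2 * exp (- (\<kappa> * real N powr \<alpha>)) + v N"
    if N: "N \<ge> 1" and gN: "real (g N) / real N \<le> 2 * L" and vN: "v N \<le> \<epsilon> / 2" for N
  proof -
    have Npos: "0 < real N" using N by simp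
    have cpos: "0 < c N" using Npos by (simp add: c_def)
    have card: "real (card {1..g N}) = real (g N)" by simp
    have Kcalc: "C / real N powr p / c N powr q = C * real N powr (\<alpha> * q - p)" for q
      unfolding c_def by (rule powr_calc[OF Npos])
    have D: "real (card {1..g N}) * (C / real N powr p) / c N powr (p - 1) \<le> \<epsilon> / 2"
    proof -
      have "real (card {1..g N}) * (C / real N powr p) / c N powr (p - 1)
             = real (g N) * (C / real N powr p / c N powr (p - 1))" by (simp add: card)
      also have "\<dots> = real (g N) * (C * real N powr (\<alpha> * (p - 1) - p))"
        by (simp only: Kcalc)
      also have "\<dots> \<le> real (g N) * (C * real N powr (-2 - r/2))"
      proof -
        have "\<alpha> * (p - 1) - p \<le> -2 - r/2" using \<alpha>p \<alpha> by (simp add: algebra_simps p_def)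
        hence "real N powr (\<alpha> * (p - 1) - p) \<le> real N powr (-2 - r/2)"
          using N by (intro powr_mono) auto
        thus ?thesis using C by (intro mult_left_mono) auto
      qed
      also have "\<dots> = v N" by (simp add: v_def)
      finally show ?thesis using vN by linarith
    qed
    have B: "real (card {1..g N}) * (1 / real N) \<le> 2 * L" using gN by simp
    have tb: "measure M {\<omega> \<in> space M. \<epsilon> < \<bar>\<Sum>i\<in>{1..g N}. (t N i \<omega> - 1 / real N)\<bar>}
           \<le> 2 * exp (- (\<theta> * \<epsilon> / (4 * c N))) + real (card {1..g N}) * (C / real N powr p) / c N powr p"
      by (rule tail_bound[OF P _ _ _ nsd[OF N] cpos eps _ _ p1 th B D])
         (use meas pos mean momI N in auto)
    have e1: "\<theta> * \<epsilon> / (4 * c N) = \<kappa> * real N powr \<alpha>"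
      using Npos by (simp add: c_def \<kappa>_def powr_minus field_simps)
    have e2: "real (card {1..g N}) * (C / real N powr p) / c N powr p = v N"
    proof -
      have "real (card {1..g N}) * (C / real N powr p) / c N powr p
             = real (g N) * (C / real N powr p / c N powr p)" by (simp add: card)
      also have "\<dots> = real (g N) * (C * real N powr (\<alpha> * p - p))"
        by (simp only: Kcalc)
      also have "\<alpha> * p - p = -2 - r/2" using \<alpha>p by (simp add: p_def)
      finally show ?thesis by (simp add: v_def)
    qed
    show ?thesis using tb N unfolding e1 e2 A_def by simp
  qed
  have vsum: "summable v" unfolding v_def by (rule g_summable[OF glim L]) (use C r in auto)
  have ev: "eventually (\<lambda>N. N \<ge> 1 \<and> real (g N) / real N \<le> 2 * L \<and> v N \<le> \<epsilon> / 2) sequentially"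
  proof -
    have "eventually (\<lambda>N. real (g N) / real N < 2 * L) sequentially"
      using L by (intro order_tendstoD(2)[OF glim]) auto
    moreover have "eventually (\<lambda>N. v N < \<epsilon> / 2) sequentially"
      using eps by (intro order_tendstoD(2)[OF summable_LIMSEQ_zero[OF vsum]]) auto
    moreover have "eventually (\<lambda>N. N \<ge> 1) sequentially" by (rule eventually_ge_at_top)
    ultimately show ?thesis by eventually_elim auto
  qed
  have Asum: "summable (\<lambda>N. measure M (A N))"
  proof (rule summable_comparison_test_ev)
    show "summable (\<lambda>N. 2 * exp (- (\<kappa> * real N powr \<alpha>)) + v N)"
      by (intro summable_add summable_mult exp_powr_summable \<kappa> \<alpha> vsum)
    show "eventually (\<lambda>N. norm (measure M (A N)) \<le> 2 * exp (- (\<kappa> * real N powr \<alpha>)) + v N) sequentially"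
      using ev by eventually_elim (use bound in auto)
  qed
  have Asets: "A N \<in> sets M" for N
  proof (cases "1 \<le> N")
    case True
    have [measurable]: "t N j \<in> borel_measurable M" if "j \<in> {1..g N}" for j
      using meas[OF True] that by auto
    have "(\<lambda>\<omega>. \<Sum>j\<in>{1..g N}. (t N j \<omega> - 1 / real N)) \<in> borel_measurable M"
      by (intro borel_measurable_sum borel_measurable_diff) (use meas[OF True] in auto)
    hence "{\<omega> \<in> space M. \<epsilon> < \<bar>\<Sum>j\<in>{1..g N}. (t N j \<omega> - 1 / real N)\<bar>} \<in> sets M" by measurable
    thus ?thesis using True by (simp add: A_def)
  qed (simp add: A_def)
  have "AE \<omega> in M. eventually (\<lambda>N. \<omega> \<in> space M - A N) sequentially"
    by (rule borel_cantelli_AE1[OF Asets _ Asum]) (simp add: less_top[symmetric])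
  thus ?thesis
  proof (rule AE_mp[OF _ AE_I2[OF impI]])
    fix \<omega> assume w: "\<omega> \<in> space M" and e: "eventually (\<lambda>N. \<omega> \<in> space M - A N) sequentially"
    show "eventually (\<lambda>N. \<bar>\<Sum>j=1..g N. (t N j \<omega> - 1 / real N)\<bar> \<le> \<epsilon>) sequentially"
      using e eventually_ge_at_top[of 1] by eventually_elim (use w in \<open>auto simp: A_def\<close>)
  qed
qed



theorem proposition4p2:
  fixes M :: "'a measure"
    and t :: "nat \<Rightarrow> nat \<Rightarrow> 'a \<Rightarrow> real"
    and g :: "nat \<Rightarrow> nat"
    and r C L :: real
  assumes "prob_space M"
    and meas: "\<And>N j. N \<ge> 1 \<Longrightarrow> j \<ge> 1 \<Longrightarrow> t N j \<in> borel_measurable M"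
    and pos: "\<And>N j \<omega>. N \<ge> 1 \<Longrightarrow> j \<ge> 1 \<Longrightarrow> \<omega> \<in> space M \<Longrightarrow> t N j \<omega> > 0"
    and mean: "\<And>N j. N \<ge> 1 \<Longrightarrow> j \<ge> 1 \<Longrightarrow>
                  integrable M (t N j) \<and> (\<integral>\<omega>. t N j \<omega> \<partial>M) = 1 / real N"
    and "r > 0" and "C > 0"
    and moment: "\<And>N j. N \<ge> 1 \<Longrightarrow> j \<ge> 1 \<Longrightarrow>
                  (\<integral>\<^sup>+\<omega>. ennreal (t N j \<omega> powr (2 + r)) \<partial>M)
                    \<le> ennreal (C / real N powr (2 + r))"
    and nsd: "\<And>N m. N \<ge> 1 \<Longrightarrow> NSD M {1..m} (\<lambda>j. t N j)"
    and "L > 0"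
    and glim: "(\<lambda>N. real (g N) / real N) \<longlonglongrightarrow> L"
  shows "(AE \<omega> in M. (\<lambda>N. \<Sum>j=1..g N. (t N j \<omega> - (\<integral>\<omega>'. t N j \<omega>' \<partial>M))) \<longlonglongrightarrow> 0)
       \<and> (AE \<omega> in M. (\<lambda>N. \<Sum>j=1..g N. t N j \<omega>) \<longlonglongrightarrow> L)"
proof -
  interpret prob_space M by (rule assms(1))
  have key: "AE \<omega> in M. eventually (\<lambda>N. \<bar>\<Sum>j=1..g N. (t N j \<omega> - 1 / real N)\<bar> \<le> inverse (real (Suc k))) sequentially" for k
  proof -
    have pk: "0 < inverse (real (Suc k))" by simp
    show ?thesis by (rule key_eps[OF assms(1) meas pos mean assms(5,6) moment nsd assms(9) glim pk])
  qed
  have "AE \<omega> in M. \<forall>k. eventually (\<lambda>N. \<bar>\<Sum>j=1..g N. (t N j \<omega> - 1 / real N)\<bar> \<le> inverse (real (Suc k))) sequentially"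
    using key by (subst AE_all_countable) auto
  hence S0: "AE \<omega> in M. (\<lambda>N. \<Sum>j=1..g N. (t N j \<omega> - 1 / real N)) \<longlonglongrightarrow> 0"
  proof (rule AE_mp[OF _ AE_I2[OF impI]])
    fix \<omega> assume H: "\<forall>k. eventually (\<lambda>N. \<bar>\<Sum>j=1..g N. (t N j \<omega> - 1 / real N)\<bar> \<le> inverse (real (Suc k))) sequentially"
    show "(\<lambda>N. \<Sum>j=1..g N. (t N j \<omega> - 1 / real N)) \<longlonglongrightarrow> 0"
    proof (rule tendstoI)
      fix e :: real assume e: "0 < e"
      obtain k where k: "inverse (real (Suc k)) < e" using reals_Archimedean[OF e] by blast
      show "eventually (\<lambda>N. dist (\<Sum>j=1..g N. (t N j \<omega> - 1 / real N)) 0 < e) sequentially"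
        using H[rule_format, of k] by eventually_elim (use k in auto)
    qed
  qed
  have evN: "eventually (\<lambda>N. (1::nat) \<le> N) sequentially" by (rule eventually_ge_at_top)
  have part1: "AE \<omega> in M. (\<lambda>N. \<Sum>j=1..g N. (t N j \<omega> - (\<integral>\<omega>'. t N j \<omega>' \<partial>M))) \<longlonglongrightarrow> 0"
    using S0
  proof (rule AE_mp[OF _ AE_I2[OF impI]])
    fix \<omega> assume T: "(\<lambda>N. \<Sum>j=1..g N. (t N j \<omega> - 1 / real N)) \<longlonglongrightarrow> 0"
    show "(\<lambda>N. \<Sum>j=1..g N. (t N j \<omega> - (\<integral>\<omega>'. t N j \<omega>' \<partial>M))) \<longlonglongrightarrow> 0"
    proof (rule Lim_transform_eventually[OF T])
      show "eventually (\<lambda>N. (\<Sum>j=1..g N. (t N j \<omega> - 1 / real N)) = (\<Sum>j=1..g N. (t N j \<omega> - (\<integral>\<omega>'. t N j \<omega>' \<partial>M)))) sequentially"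
        using evN by eventually_elim (auto intro!: sum.cong simp: mean)
    qed
  qed
  have part2: "AE \<omega> in M. (\<lambda>N. \<Sum>j=1..g N. t N j \<omega>) \<longlonglongrightarrow> L"
    using S0
  proof (rule AE_mp[OF _ AE_I2[OF impI]])
    fix \<omega> assume T: "(\<lambda>N. \<Sum>j=1..g N. (t N j \<omega> - 1 / real N)) \<longlonglongrightarrow> 0"
    have "(\<lambda>N. (\<Sum>j=1..g N. (t N j \<omega> - 1 / real N)) + real (g N) / real N) \<longlonglongrightarrow> 0 + L"
      by (intro tendsto_add T glim)
    hence T2: "(\<lambda>N. (\<Sum>j=1..g N. (t N j \<omega> - 1 / real N)) + real (g N) / real N) \<longlonglongrightarrow> L" by simp
    show "(\<lambda>N. \<Sum>j=1..g N. t N j \<omega>) \<longlonglongrightarrow> L"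
    proof (rule Lim_transform_eventually[OF T2])
      show "eventually (\<lambda>N. (\<Sum>j=1..g N. (t N j \<omega> - 1 / real N)) + real (g N) / real N = (\<Sum>j=1..g N. t N j \<omega>)) sequentially"
        using evN by eventually_elim (simp add: sum_subtractf)
    qed
  qed
  show ?thesis using part1 part2 by blast
qed

end
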